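(* Let $E$ be a Banach lattice with the property (d), and let $A \subset E$. Then $|A| = \{|x| : x \in A\}$ is an almost Grothendieck set if and only if the solid hull $\mathrm{sol}(A)$ is an almost Grothendieck set.
   Context: Every bounded linear operator $T: E \to c_0$ on a Banach lattice $E$ is of the form $T(x) = (x_n'(x))_n$ for a unique weak* null sequence $(x_n') \subset E'$; $T$ is a disjoint operator if $(x_n')$ is a disjoint sequence in the dual Banach lattice $E'$. A subset $A \subset E$ is almost Grothendieck if $T(A)$ is relatively weakly compact in $c_0$ for every disjoint operator $T: E \to c_0$. $E$ has the property (d) if $|x_n'| \to 0$ weak* in $E'$ for every disjoint weak* null sequence $(x_n')$ in $E'$. The solid hull is $\mathrm{sol}(A) = \{x \in E : |x| \le |y| \text{ for some } y \in A\}$. *)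

theory Defs
  imports "HOL-Analysis.Analysis"
begin

definition labs :: "'a::{lattice, uminus} \<Rightarrow> 'a" where
  "labs x = sup x (- x)"

class banach_lattice = banach + ordered_real_vector + lattice +
  assumes norm_lattice_mono: "sup x (- x) \<le> sup y (- y) \<Longrightarrow> norm x \<le> norm y"

text \<open>The modulus of f in E' is given by the
  Riesz--Kantorovich formula |f|(u) = sup { |f y| : |y| \<le> u } for u \<ge> 0, extended linearly:
  |f|(x) = |f|(x^+) - |f|(x^-).\<close>

definition dual_abs_pos :: "('a::banach_lattice \<Rightarrow> real) \<Rightarrow> 'a \<Rightarrow> real" where
  "dual_abs_pos f u = Sup {\<bar>f y\<bar> | y. labs y \<le> u}"

definition dual_abs :: "('a::banach_lattice \<Rightarrow> real) \<Rightarrow> 'a \<Rightarrow> real" where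
  "dual_abs f x = dual_abs_pos f (sup x 0) - dual_abs_pos f (sup (- x) 0)"

text \<open>Disjointness in E': |f| \<sqinter> |g| = 0, where the infimum of positive functionals h, k is
  (h \<sqinter> k)(x) = inf { h y + k (x - y) : 0 \<le> y \<le> x } for x \<ge> 0.\<close>

definition dual_disjoint :: "('a::banach_lattice \<Rightarrow> real) \<Rightarrow> ('a \<Rightarrow> real) \<Rightarrow> bool" where
  "dual_disjoint f g \<longleftrightarrow>
     (\<forall>x. 0 \<le> x \<longrightarrow> Inf {dual_abs f y + dual_abs g (x - y) | y. 0 \<le> y \<and> y \<le> x} = 0)"

definition disjoint_dual_seq :: "(nat \<Rightarrow> 'a::banach_lattice \<Rightarrow> real) \<Rightarrow> bool" where
  "disjoint_dual_seq f \<longleftrightarrow> (\<forall>n m. n \<noteq> m \<longrightarrow> dual_disjoint (f n) (f m))"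

definition weak_star_null :: "(nat \<Rightarrow> 'a::real_normed_vector \<Rightarrow> real) \<Rightarrow> bool" where
  "weak_star_null f \<longleftrightarrow> (\<forall>n. bounded_linear (f n)) \<and> (\<forall>x. (\<lambda>n. f n x) \<longlonglongrightarrow> 0)"

definition c0 :: "(nat \<Rightarrow> real) set" where
  "c0 = {s. s \<longlonglongrightarrow> 0}"

definition c0_norm :: "(nat \<Rightarrow> real) \<Rightarrow> real" where
  "c0_norm s = (SUP n. \<bar>s n\<bar>)"

definition c0_dual :: "((nat \<Rightarrow> real) \<Rightarrow> real) set" where
  "c0_dual = {\<phi>. (\<forall>s\<in>c0. \<forall>t\<in>c0. \<forall>a b. \<phi> (\<lambda>n. a * s n + b * t n) = a * \<phi> s + b * \<phi> t)
                 \<and> (\<exists>K. \<forall>s\<in>c0. \<bar>\<phi> s\<bar> \<le> K * c0_norm s)}"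

definition c0_weak :: "(nat \<Rightarrow> real) topology" where
  "c0_weak = topology_generated_by {{s \<in> c0. \<phi> s \<in> U} | \<phi> U. \<phi> \<in> c0_dual \<and> open U}"

definition rel_weakly_compact_c0 :: "(nat \<Rightarrow> real) set \<Rightarrow> bool" where
  "rel_weakly_compact_c0 S \<longleftrightarrow> S \<subseteq> c0 \<and> compactin c0_weak (c0_weak closure_of S)"

text \<open>A disjoint operator T : E \<rightarrow> c_0 is T x = (f n x)_n with (f n) a disjoint weak* null
  sequence in E'.\<close>
definition almost_grothendieck :: "'a::banach_lattice set \<Rightarrow> bool" where
  "almost_grothendieck A \<longleftrightarrow>
     (\<forall>f. weak_star_null f \<and> disjoint_dual_seq f \<longrightarrow>
          rel_weakly_compact_c0 ((\<lambda>x n. f n x) ` A))"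

definition property_d :: "'a::banach_lattice itself \<Rightarrow> bool" where
  "property_d _ \<longleftrightarrow>
     (\<forall>f :: nat \<Rightarrow> 'a \<Rightarrow> real. weak_star_null f \<and> disjoint_dual_seq f \<longrightarrow>
          (\<forall>x. (\<lambda>n. dual_abs (f n) x) \<longlonglongrightarrow> 0))"

definition sol :: "'a::banach_lattice set \<Rightarrow> 'a set" where
  "sol A = {x. \<exists>y\<in>A. labs x \<le> labs y}"

end

theory Submission
  imports Defs "HOL-Library.Lattice_Algebras"
begin

context banach_lattice begin
subclass lattice_ab_group_add ..
end

lemma half_nonneg: "0 \<le> a + a \<Longrightarrow> 0 \<le> (a::'a::banach_lattice)"
proof -
  assume h: "0 \<le> a + a"
  have "(1/2::real) *\<^sub>R (a + a) = ((1/2) + (1/2)) *\<^sub>R a" by (simp only: scaleR_add_right scaleR_add_left)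
  then have "a = (1/2::real) *\<^sub>R (a + a)" by simp
  also have "0 \<le> \<dots>" by (rule scaleR_nonneg_nonneg) (use h in auto)
  finally show ?thesis .
qed

lemma labs_nonneg: "0 \<le> labs (x::'a::banach_lattice)"
proof (rule half_nonneg)
  have "x + (-x) \<le> labs x + labs x" unfolding labs_def by (intro add_mono) auto
  then show "0 \<le> labs x + labs x" by simp
qed

lemma labs_ge: "x \<le> labs (x::'a::banach_lattice)" "- x \<le> labs x"
  unfolding labs_def by auto

lemma labs_le_iff: "labs (x::'a::banach_lattice) \<le> u \<longleftrightarrow> x \<le> u \<and> - x \<le> u"
  unfolding labs_def by simp

lemma labs_pos: "0 \<le> (u::'a::banach_lattice) \<Longrightarrow> labs u = u"
  unfolding labs_def by (rule sup_absorb1) (meson neg_le_0_iff_le order_trans)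

lemma labs_zero_iff: "labs (y::'a::banach_lattice) \<le> 0 \<longleftrightarrow> y = 0"
proof
  assume "labs y \<le> 0"
  then have "y \<le> 0" "- y \<le> 0" using labs_le_iff by blast+
  then show "y = 0" by (meson antisym neg_le_0_iff_le)
qed (simp add: labs_def)

lemma labs_scale_le: "0 \<le> r \<Longrightarrow> labs (r *\<^sub>R (y::'a::banach_lattice)) \<le> r *\<^sub>R labs y"
proof -
  assume r: "0 \<le> r"
  have "r *\<^sub>R y \<le> r *\<^sub>R labs y" by (rule scaleR_left_mono[OF labs_ge(1) r])
  moreover have "r *\<^sub>R (- y) \<le> r *\<^sub>R labs y" by (rule scaleR_left_mono[OF labs_ge(2) r])
  ultimately show ?thesis unfolding labs_le_iff by simp
qed

lemma labs_triangle: "labs ((x::'a::banach_lattice) + y) \<le> labs x + labs y"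
proof -
  have "x + y \<le> labs x + labs y" by (rule add_mono[OF labs_ge(1) labs_ge(1)])
  moreover have "-x + -y \<le> labs x + labs y" by (rule add_mono[OF labs_ge(2) labs_ge(2)])
  moreover have "- (x + y) = -x + -y" by simp
  ultimately show ?thesis unfolding labs_le_iff by simp
qed

lemma labs_minus: "labs (- (x::'a::banach_lattice)) = labs x"
  unfolding labs_def by (simp add: sup_commute)

lemma norm_labs_mono: "labs (x::'a::banach_lattice) \<le> labs y \<Longrightarrow> norm x \<le> norm y"
  unfolding labs_def by (rule norm_lattice_mono)

lemma pos_neg_decomp: "sup (x::'a::banach_lattice) 0 - sup (- x) 0 = x"
proof -
  have "sup (- x) 0 = - inf x 0" using neg_inf_eq_sup[of x 0] by simp
  then show ?thesis using add_eq_inf_sup[of x 0] by (simp add: diff_conv_add_uminus add.commute)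
qed

lemma pos_part_nonneg: "0 \<le> sup (x::'a::banach_lattice) 0" by simp

lemma pos_part_le: "sup (x::'a::banach_lattice) 0 \<le> labs x" "sup (- x) 0 \<le> labs x"
  using labs_ge[of x] labs_nonneg[of x] by auto

lemma labs_zero: "labs (0::'a::banach_lattice) = 0" by (simp add: labs_def)

lemma diff_le_aux: "(a::'a::ordered_ab_group_add) \<le> v + b \<Longrightarrow> a - b \<le> v"
  by (simp add: diff_le_eq add.commute)

lemma swap_aux: "p - q = a - b \<Longrightarrow> p + b = a + (q::'a::ab_group_add)"
  by (metis add.commute diff_add_cancel add_diff_eq diff_eq_eq)

lemma sum_aux: "x = p1 - q1 \<Longrightarrow> y = p2 - q2 \<Longrightarrow> x + y = (p1 + p2) - (q1 + (q2::'a::ab_group_add))"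
  by (simp add: algebra_simps)

lemma split_pos:
  fixes p u v :: "'a::banach_lattice"
  assumes "0 \<le> p" "p \<le> u + v" "0 \<le> u" "0 \<le> v"
  shows "0 \<le> inf p u" "inf p u \<le> u" "0 \<le> p - inf p u" "p - inf p u \<le> v"
proof -
  show "0 \<le> inf p u" using assms by simp
  show "inf p u \<le> u" by simp
  have "inf p u \<le> p" by simp
  then show "0 \<le> p - inf p u" by (simp only: diff_ge_0_iff_ge)
  have "p \<le> v + p" using assms(4) by (simp add: add_increasing)
  moreover have "p \<le> v + u" using assms(2) by (simp add: add.commute)
  ultimately have "p \<le> inf (v + p) (v + u)" by simp
  then have "p \<le> v + inf p u" by (simp add: add_inf_distrib_left)
  then show "p - inf p u \<le> v" by (rule diff_le_aux)
qed

lemma diff_box: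
  fixes a b w :: "'a::banach_lattice"
  assumes "0 \<le> a" "a \<le> w" "0 \<le> b" "b \<le> w"
  shows "labs (a - b) \<le> w"
proof -
  have "a - b \<le> w" using assms by (meson diff_le_eq order_trans add_increasing2 order_refl)
  moreover have "- (a - b) \<le> w" using assms
    by (metis minus_diff_eq diff_le_eq order_trans add_increasing2 order_refl)
  ultimately show ?thesis unfolding labs_le_iff by simp
qed

lemma ab_aux: "(a - b) + ((c - a) - (d - b)) = c - (d::'a::ab_group_add)"
  by (simp add: algebra_simps)

lemma riesz:
  fixes y u v :: "'a::banach_lattice"
  assumes u: "0 \<le> u" and v: "0 \<le> v" and y: "labs y \<le> u + v"
  shows "\<exists>z1 z2. y = z1 + z2 \<and> labs z1 \<le> u \<and> labs z2 \<le> v"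
proof -
  define p where "p = sup y 0"
  define q where "q = sup (- y) 0"
  have p: "0 \<le> p" "p \<le> u + v" using pos_part_le(1)[of y] y by (auto simp: p_def)
  have q: "0 \<le> q" "q \<le> u + v" using pos_part_le(2)[of y] y by (auto simp: q_def)
  note P = split_pos[OF p u v] and Q = split_pos[OF q u v]
  define z1 where "z1 = inf p u - inf q u"
  define z2 where "z2 = (p - inf p u) - (q - inf q u)"
  have "y = p - q" using pos_neg_decomp[of y] by (simp add: p_def q_def)
  then have "y = z1 + z2" unfolding z1_def z2_def by (simp only: ab_aux)
  moreover have "labs z1 \<le> u" unfolding z1_def by (rule diff_box) (use P Q in auto)
  moreover have "labs z2 \<le> v" unfolding z2_def by (rule diff_box) (use P Q in auto)
  ultimately show ?thesis by blast
qed

section \<open>Riesz-Kantorovich\<close>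

context
  fixes f :: "'a::banach_lattice \<Rightarrow> real"
  assumes bl: "bounded_linear f"
begin

lemma f_add: "f (x + y) = f x + f y" using bl by (rule linear_simps(1))
lemma f_scale: "f (r *\<^sub>R x) = r * f x" using linear_simps(5)[OF bl] by simp
lemma f_minus: "f (- x) = - f x" using bl by (rule linear_simps(4))
lemma f_zero: "f 0 = 0" using bl by (rule linear_simps(3))

lemma dap_ne: "0 \<le> u \<Longrightarrow> {\<bar>f y\<bar> | y. labs y \<le> u} \<noteq> {}"
proof -
  assume "0 \<le> u"
  then have "labs 0 \<le> u" by (simp add: labs_zero)
  then show ?thesis by blast
qed

lemma dap_bdd: "0 \<le> u \<Longrightarrow> bdd_above {\<bar>f y\<bar> | y. labs y \<le> u}"
proof -
  assume u: "0 \<le> u"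
  obtain K where K: "\<And>x. norm (f x) \<le> norm x * K" "K > 0" using bounded_linear.pos_bounded[OF bl] by blast
  have "\<bar>f y\<bar> \<le> norm u * K" if "labs y \<le> u" for y
  proof -
    have "norm y \<le> norm u" using that labs_pos[OF u] norm_labs_mono by metis
    then show ?thesis using K(1)[of y] K(2) by (smt (verit) mult_right_mono real_norm_def)
  qed
  then show ?thesis unfolding bdd_above_def by blast
qed

lemma dap_upper: "0 \<le> u \<Longrightarrow> labs y \<le> u \<Longrightarrow> \<bar>f y\<bar> \<le> dual_abs_pos f u"
  unfolding dual_abs_pos_def by (rule cSup_upper) (auto intro: dap_bdd)

lemma dap_least: "0 \<le> u \<Longrightarrow> (\<And>y. labs y \<le> u \<Longrightarrow> \<bar>f y\<bar> \<le> B) \<Longrightarrow> dual_abs_pos f u \<le> B"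
  unfolding dual_abs_pos_def by (rule cSup_least[OF dap_ne]) auto

lemma dap_nonneg: "0 \<le> u \<Longrightarrow> 0 \<le> dual_abs_pos f u"
  using dap_upper[of u 0] by (simp add: labs_zero f_zero)

lemma dap_zero: "dual_abs_pos f 0 = 0"
proof -
  have "dual_abs_pos f 0 \<le> 0" by (rule dap_least) (auto simp: labs_zero_iff f_zero)
  then show ?thesis using dap_nonneg[of 0] by simp
qed

lemma dap_mono: "0 \<le> u \<Longrightarrow> u \<le> v \<Longrightarrow> dual_abs_pos f u \<le> dual_abs_pos f v"
  by (rule dap_least) (auto intro!: dap_upper)

lemma dap_bound: "\<exists>K\<ge>0. \<forall>u. 0 \<le> u \<longrightarrow> dual_abs_pos f u \<le> K * norm u"
proof -
  obtain K where K: "\<And>x. norm (f x) \<le> norm x * K" "K > 0" using bounded_linear.pos_bounded[OF bl] by blast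
  have "dual_abs_pos f u \<le> K * norm u" if u: "0 \<le> u" for u
  proof (rule dap_least[OF u])
    fix y assume "labs y \<le> u"
    then have "norm y \<le> norm u" using labs_pos[OF u] norm_labs_mono by metis
    then show "\<bar>f y\<bar> \<le> K * norm u" using K(1)[of y] K(2) by (smt (verit) mult_left_mono real_norm_def mult.commute)
  qed
  then show ?thesis using K(2) by (auto intro!: exI[of _ K])
qed

lemma dap_add:
  assumes u: "0 \<le> u" and v: "0 \<le> v"
  shows "dual_abs_pos f (u + v) = dual_abs_pos f u + dual_abs_pos f v"
proof (rule antisym)
  show "dual_abs_pos f (u + v) \<le> dual_abs_pos f u + dual_abs_pos f v"
  proof (rule dap_least)
    show "0 \<le> u + v" using u v by simp
    fix y assume "labs y \<le> u + v"
    then obtain z1 z2 where z: "y = z1 + z2" "labs z1 \<le> u" "labs z2 \<le> v" using riesz[OF u v] by blast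
    have "\<bar>f y\<bar> \<le> \<bar>f z1\<bar> + \<bar>f z2\<bar>" using z(1) f_add by simp
    also have "\<dots> \<le> dual_abs_pos f u + dual_abs_pos f v"
      using dap_upper[OF u z(2)] dap_upper[OF v z(3)] by simp
    finally show "\<bar>f y\<bar> \<le> dual_abs_pos f u + dual_abs_pos f v" .
  qed
next
  have uv: "0 \<le> u + v" using u v by simp
  have sgn: "\<exists>y'. labs y' = labs y \<and> f y' = \<bar>f y\<bar>" for y
  proof (cases "f y \<ge> 0")
    case True then show ?thesis by (intro exI[of _ y]) simp
  next
    case False then show ?thesis by (intro exI[of _ "- y"]) (simp add: labs_minus f_minus)
  qed
  have key: "\<bar>f y1\<bar> + \<bar>f y2\<bar> \<le> dual_abs_pos f (u + v)" if "labs y1 \<le> u" "labs y2 \<le> v" for y1 y2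
  proof -
    obtain y1' where y1': "labs y1' = labs y1" "f y1' = \<bar>f y1\<bar>" using sgn by blast
    obtain y2' where y2': "labs y2' = labs y2" "f y2' = \<bar>f y2\<bar>" using sgn by blast
    have "labs (y1' + y2') \<le> labs y1' + labs y2'" by (rule labs_triangle)
    also have "\<dots> \<le> u + v" using that y1' y2' by (simp add: add_mono)
    finally have "\<bar>f (y1' + y2')\<bar> \<le> dual_abs_pos f (u + v)" by (rule dap_upper[OF uv])
    then show ?thesis using y1' y2' f_add by simp
  qed
  have "\<bar>f y2\<bar> \<le> dual_abs_pos f (u + v) - dual_abs_pos f u" if y2: "labs y2 \<le> v" for y2
  proof -
    have "dual_abs_pos f u \<le> dual_abs_pos f (u + v) - \<bar>f y2\<bar>"
      by (rule dap_least[OF u]) (use key[OF _ y2] in force)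
    then show ?thesis by simp
  qed
  then have "dual_abs_pos f v \<le> dual_abs_pos f (u + v) - dual_abs_pos f u"
    by (rule dap_least[OF v])
  then show "dual_abs_pos f u + dual_abs_pos f v \<le> dual_abs_pos f (u + v)" by simp
qed

lemma dap_scale_le:
  assumes c: "0 < c" and u: "0 \<le> u"
  shows "dual_abs_pos f (c *\<^sub>R u) \<le> c * dual_abs_pos f u"
proof -
  show ?thesis
proof (rule dap_least)
  show "0 \<le> c *\<^sub>R u" using c u by (simp add: scaleR_nonneg_nonneg)
  fix y assume y: "labs y \<le> c *\<^sub>R u"
  define z where "z = (1/c) *\<^sub>R y"
  have yz: "y = c *\<^sub>R z" using c by (simp add: z_def)
  have "labs z \<le> (1/c) *\<^sub>R labs y" unfolding z_def by (rule labs_scale_le) (use c in simp)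
  also have "\<dots> \<le> (1/c) *\<^sub>R (c *\<^sub>R u)" by (rule scaleR_left_mono[OF y]) (use c in simp)
  also have "\<dots> = u" using c by simp
  finally have "\<bar>f z\<bar> \<le> dual_abs_pos f u" by (rule dap_upper[OF u])
  then show "\<bar>f y\<bar> \<le> c * dual_abs_pos f u" using c by (simp add: yz f_scale abs_mult)
qed
qed

lemma dap_scale:
  assumes c: "0 \<le> c" and u: "0 \<le> u"
  shows "dual_abs_pos f (c *\<^sub>R u) = c * dual_abs_pos f u"
proof (cases "c = 0")
  case True then show ?thesis by (simp add: dap_zero)
next
  case False
  then have c': "0 < c" using c by simp
  have cu: "0 \<le> c *\<^sub>R u" using c u by (simp add: scaleR_nonneg_nonneg)
  have "dual_abs_pos f u = dual_abs_pos f ((1/c) *\<^sub>R (c *\<^sub>R u))" using c' by simp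
  also have "\<dots> \<le> (1/c) * dual_abs_pos f (c *\<^sub>R u)" by (rule dap_scale_le[OF _ cu]) (use c' in simp)
  finally have "c * dual_abs_pos f u \<le> dual_abs_pos f (c *\<^sub>R u)" using c' by (simp add: field_simps)
  then show ?thesis using dap_scale_le[OF c' u] by simp
qed

lemma da_repr:
  assumes a: "0 \<le> a" and b: "0 \<le> b"
  shows "dual_abs f (a - b) = dual_abs_pos f a - dual_abs_pos f b"
proof -
  define x where "x = a - b"
  have "sup x 0 - sup (- x) 0 = a - b" using pos_neg_decomp[of x] by (simp add: x_def)
  then have "sup x 0 + b = a + sup (- x) 0" by (rule swap_aux)
  then have "dual_abs_pos f (sup x 0 + b) = dual_abs_pos f (a + sup (- x) 0)" by simp
  then have "dual_abs_pos f (sup x 0) + dual_abs_pos f b = dual_abs_pos f a + dual_abs_pos f (sup (- x) 0)"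
    using dap_add a b by simp
  then show ?thesis unfolding dual_abs_def x_def[symmetric] by simp
qed

lemma da_pos: "0 \<le> u \<Longrightarrow> dual_abs f u = dual_abs_pos f u"
  using da_repr[of u 0] by (simp add: dap_zero)

lemma da_linear: "bounded_linear (dual_abs f)"
proof -
  define P where "P = dual_abs_pos f"
  have dec: "x = sup x 0 - sup (- x) 0" for x :: 'a using pos_neg_decomp[of x] by simp
  have D: "dual_abs f x = P (sup x 0) - P (sup (- x) 0)" for x unfolding dual_abs_def P_def ..
  obtain K where K: "K \<ge> 0" "\<And>u. 0 \<le> u \<Longrightarrow> P u \<le> K * norm u" using dap_bound unfolding P_def by blast
  have np: "norm (sup x 0) \<le> norm x" "norm (sup (- x) 0) \<le> norm x" for x :: 'a
    using norm_labs_mono[of "sup x 0" x] norm_labs_mono[of "sup (- x) 0" x]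
      labs_pos[OF pos_part_nonneg[of x]] labs_pos[OF pos_part_nonneg[of "- x"]] pos_part_le[of x] by auto
  show ?thesis
  proof (rule bounded_linear_intro[where K="2 * K"])
    fix x y :: 'a
    have "x + y = (sup x 0 + sup y 0) - (sup (- x) 0 + sup (- y) 0)"
      by (rule sum_aux[OF dec[of x] dec[of y]])
    then have "dual_abs f (x + y) = P (sup x 0 + sup y 0) - P (sup (- x) 0 + sup (- y) 0)"
      using da_repr[of "sup x 0 + sup y 0" "sup (- x) 0 + sup (- y) 0"] by (simp add: P_def)
    also have "\<dots> = dual_abs f x + dual_abs f y" unfolding D P_def by (simp add: dap_add)
    finally show "dual_abs f (x + y) = dual_abs f x + dual_abs f y" .
  next
    fix r :: real and x :: 'a
    show "dual_abs f (r *\<^sub>R x) = r *\<^sub>R dual_abs f x"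
    proof (cases "r \<ge> 0")
      case True
      have "r *\<^sub>R x = r *\<^sub>R sup x 0 - r *\<^sub>R sup (- x) 0" using dec[of x] by (metis scaleR_diff_right)
      then have "dual_abs f (r *\<^sub>R x) = P (r *\<^sub>R sup x 0) - P (r *\<^sub>R sup (- x) 0)"
        using da_repr[of "r *\<^sub>R sup x 0" "r *\<^sub>R sup (- x) 0"] True by (simp add: P_def scaleR_nonneg_nonneg)
      also have "\<dots> = r * dual_abs f x" unfolding D P_def using True by (simp add: dap_scale algebra_simps)
      finally show ?thesis by simp
    next
      case False
      have req: "r *\<^sub>R x = (- r) *\<^sub>R sup (- x) 0 - (- r) *\<^sub>R sup x 0" using dec[of x]
        by (metis minus_diff_eq scaleR_diff_right scaleR_minus_left)
      have nn: "0 \<le> (- r) *\<^sub>R sup (- x) 0" "0 \<le> (- r) *\<^sub>R sup x 0"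
        by (intro scaleR_nonneg_nonneg; use False in simp)+
      have "dual_abs f (r *\<^sub>R x) = dual_abs f ((- r) *\<^sub>R sup (- x) 0 - (- r) *\<^sub>R sup x 0)"
        using req by (rule arg_cong)
      also have "\<dots> = P ((- r) *\<^sub>R sup (- x) 0) - P ((- r) *\<^sub>R sup x 0)"
        unfolding P_def by (rule da_repr[OF nn])
      finally have "dual_abs f (r *\<^sub>R x) = P ((- r) *\<^sub>R sup (- x) 0) - P ((- r) *\<^sub>R sup x 0)" .
      then have "dual_abs f (r *\<^sub>R x) = P ((- r) *\<^sub>R sup (- x) 0) - P ((- r) *\<^sub>R sup x 0)" .
      also have "\<dots> = (- r) * P (sup (- x) 0) - (- r) * P (sup x 0)"
        unfolding P_def using False by (simp only: dap_scale[of "- r"] pos_part_nonneg neg_0_le_iff_le not_le less_imp_le)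
      also have "\<dots> = r * dual_abs f x" unfolding D by (simp add: algebra_simps)
      finally show ?thesis by simp
    qed
  next
    fix x :: 'a
    have "\<bar>dual_abs f x\<bar> \<le> P (sup x 0) + P (sup (- x) 0)"
      unfolding D using dap_nonneg[of "sup x 0"] dap_nonneg[of "sup (- x) 0"] by (simp add: P_def)
    also have "\<dots> \<le> K * norm (sup x 0) + K * norm (sup (- x) 0)"
      using K(2)[of "sup x 0"] K(2)[of "sup (- x) 0"] by simp
    also have "\<dots> \<le> K * norm x + K * norm x"
      using mult_left_mono[OF np(1)[of x] K(1)] mult_left_mono[OF np(2)[of x] K(1)] by linarith
    finally show "norm (dual_abs f x) \<le> norm x * (2 * K)" by (simp add: mult.commute mult.left_commute)
  qed
qed

lemma da_dom: "labs x \<le> labs y \<Longrightarrow> \<bar>f x\<bar> \<le> dual_abs f (labs y)"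
proof -
  assume h: "labs x \<le> labs y"
  have "\<bar>f x\<bar> \<le> dual_abs_pos f (labs x)" by (rule dap_upper[OF labs_nonneg order_refl])
  also have "\<dots> \<le> dual_abs_pos f (labs y)" by (rule dap_mono[OF labs_nonneg h])
  also have "\<dots> = dual_abs f (labs y)" by (rule da_pos[symmetric, OF labs_nonneg])
  finally show ?thesis .
qed

lemma da_pos_nonneg: "0 \<le> u \<Longrightarrow> 0 \<le> dual_abs f u"
  using da_pos dap_nonneg by simp

end

lemma da_idem:
  assumes bl: "bounded_linear (f :: 'a::banach_lattice \<Rightarrow> real)"
  shows "dual_abs (dual_abs f) = dual_abs f"
proof -
  have bl': "bounded_linear (dual_abs f)" by (rule da_linear[OF bl])
  have eq: "dual_abs_pos (dual_abs f) u = dual_abs_pos f u" if u: "0 \<le> u" for u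
  proof (rule antisym)
    show "dual_abs_pos (dual_abs f) u \<le> dual_abs_pos f u"
    proof (rule dap_least[OF bl' u])
      fix y assume y: "labs y \<le> u"
      have a: "0 \<le> dual_abs_pos f (sup y 0)" "dual_abs_pos f (sup y 0) \<le> dual_abs_pos f u"
        using dap_nonneg[OF bl] dap_mono[OF bl pos_part_nonneg order_trans[OF pos_part_le(1) y]] by auto
      have b: "0 \<le> dual_abs_pos f (sup (- y) 0)" "dual_abs_pos f (sup (- y) 0) \<le> dual_abs_pos f u"
        using dap_nonneg[OF bl] dap_mono[OF bl pos_part_nonneg order_trans[OF pos_part_le(2) y]] by auto
      show "\<bar>dual_abs f y\<bar> \<le> dual_abs_pos f u" unfolding dual_abs_def using a b by linarith
    qed
  next
    have "\<bar>dual_abs f u\<bar> \<le> dual_abs_pos (dual_abs f) u"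
      by (rule dap_upper[OF bl' u]) (simp add: labs_pos[OF u])
    then show "dual_abs_pos f u \<le> dual_abs_pos (dual_abs f) u"
      using da_pos[OF bl u] dap_nonneg[OF bl u] by simp
  qed
  show ?thesis
  proof
    fix x
    show "dual_abs (dual_abs f) x = dual_abs f x"
      unfolding dual_abs_def[of "dual_abs f"] using eq pos_part_nonneg
      by (simp add: dual_abs_def[of f])
  qed
qed

lemma zero_c0_dual: "(\<lambda>_. 0) \<in> c0_dual"
  unfolding c0_dual_def by (auto intro!: exI[of _ 0])

lemma c0_topspace: "topspace c0_weak = c0"
proof -
  have "\<Union>{{s \<in> c0. \<phi> s \<in> U} | \<phi> U. \<phi> \<in> c0_dual \<and> open U} = c0"
  proof
    show "c0 \<subseteq> \<Union>{{s \<in> c0. \<phi> s \<in> U} | \<phi> U. \<phi> \<in> c0_dual \<and> open U}"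
      using zero_c0_dual by (auto intro!: exI[of _ "{s \<in> c0. (\<lambda>_. 0::real) s \<in> UNIV}"])
  qed auto
  then show ?thesis unfolding c0_weak_def by simp
qed

lemma c0_Bseq: "s \<in> c0 \<Longrightarrow> \<exists>B>0. \<forall>n. \<bar>s n\<bar> \<le> B"
  unfolding c0_def using convergent_imp_Bseq[of s] by (auto simp: convergent_def Bseq_def)

lemma c0_norm_ge: "s \<in> c0 \<Longrightarrow> \<bar>s n\<bar> \<le> c0_norm s"
  unfolding c0_norm_def using c0_Bseq[of s]
  by (intro cSUP_upper) (auto simp: bdd_above_def)

lemma c0_norm_le: "(\<And>n. \<bar>s n\<bar> \<le> B) \<Longrightarrow> c0_norm s \<le> B"
  unfolding c0_norm_def by (intro cSUP_least) auto

lemma c0_norm_nonneg: "s \<in> c0 \<Longrightarrow> 0 \<le> c0_norm s"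
  using c0_norm_ge[of s 0] by linarith

lemma c0_dual_cont:
  assumes "\<phi> \<in> c0_dual" shows "continuous_map c0_weak euclidean \<phi>"
  unfolding continuous_map_def
proof (intro conjI allI impI)
  fix U :: "real set" assume "openin euclidean U"
  then have "open U" by simp
  have "{x \<in> topspace c0_weak. \<phi> x \<in> U} = {s \<in> c0. \<phi> s \<in> U}" by (simp add: c0_topspace)
  also have "openin c0_weak \<dots>" unfolding c0_weak_def
    by (rule topology_generated_by_Basis) (use assms \<open>open U\<close> in blast)
  finally show "openin c0_weak {x \<in> topspace c0_weak. \<phi> x \<in> U}" .
qed auto

lemma coord_c0_dual: "(\<lambda>s. s n) \<in> c0_dual"
  unfolding c0_dual_def by (auto intro!: exI[of _ 1] c0_norm_ge)

lemma coord_cont: "continuous_map c0_weak euclidean (\<lambda>s. s n)"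
  by (rule c0_dual_cont[OF coord_c0_dual])

lemma l1_summable:
  assumes "summable (\<lambda>n. \<bar>a n\<bar>)" "s \<in> c0"
  shows "summable (\<lambda>n. a n * s n)" "summable (\<lambda>n. \<bar>a n * s n\<bar>)"
    "\<bar>\<Sum>n. a n * s n\<bar> \<le> (\<Sum>n. \<bar>a n\<bar>) * c0_norm s"
proof -
  have b: "\<bar>a n * s n\<bar> \<le> \<bar>a n\<bar> * c0_norm s" for n
    by (simp add: abs_mult c0_norm_ge assms(2) mult_left_mono)
  have sg: "summable (\<lambda>n. \<bar>a n\<bar> * c0_norm s)" using assms(1) by (rule summable_mult2)
  show s1: "summable (\<lambda>n. \<bar>a n * s n\<bar>)"
    by (rule summable_comparison_test[OF _ sg]) (use b in auto)
  then show "summable (\<lambda>n. a n * s n)" by (rule summable_rabs_cancel)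
  have "\<bar>\<Sum>n. a n * s n\<bar> \<le> (\<Sum>n. \<bar>a n * s n\<bar>)" using s1 by (rule summable_rabs)
  also have "\<dots> \<le> (\<Sum>n. \<bar>a n\<bar> * c0_norm s)" by (rule suminf_le[OF b s1 sg])
  also have "\<dots> = (\<Sum>n. \<bar>a n\<bar>) * c0_norm s" using assms(1) by (rule suminf_mult2[symmetric])
  finally show "\<bar>\<Sum>n. a n * s n\<bar> \<le> (\<Sum>n. \<bar>a n\<bar>) * c0_norm s" .
qed

lemma l1_c0_dual:
  assumes "summable (\<lambda>n. \<bar>a n\<bar>)"
  shows "(\<lambda>s. \<Sum>n. a n * s n) \<in> c0_dual"
  unfolding c0_dual_def
proof (intro CollectI conjI ballI allI exI)
  fix s t x y assume st: "s \<in> c0" "t \<in> c0"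
  have "(\<Sum>n. a n * (x * s n + y * t n)) = (\<Sum>n. x * (a n * s n) + y * (a n * t n))"
    by (simp add: algebra_simps)
  also have "\<dots> = (\<Sum>n. x * (a n * s n)) + (\<Sum>n. y * (a n * t n))"
    using l1_summable[OF assms st(1)] l1_summable[OF assms st(2)]
    by (intro suminf_add[symmetric] summable_mult)
  also have "\<dots> = x * (\<Sum>n. a n * s n) + y * (\<Sum>n. a n * t n)"
    using l1_summable[OF assms st(1)] l1_summable[OF assms st(2)]
    by (simp add: suminf_mult)
  finally show "(\<Sum>n. a n * (x * s n + y * t n)) = x * (\<Sum>n. a n * s n) + y * (\<Sum>n. a n * t n)" .
next
  fix s assume "s \<in> c0"
  then show "\<bar>\<Sum>n. a n * s n\<bar> \<le> (\<Sum>n. \<bar>a n\<bar>) * c0_norm s" using l1_summable[OF assms] by blast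
qed

lemma c0_lin: "s \<in> c0 \<Longrightarrow> t \<in> c0 \<Longrightarrow> (\<lambda>n. x * s n + y * t n) \<in> c0"
  unfolding c0_def using tendsto_add[OF tendsto_mult_right_zero[of s sequentially x] tendsto_mult_right_zero[of t sequentially y]]
  by simp

lemma c0_ev0: "(\<And>k. k \<ge> N \<Longrightarrow> s k = 0) \<Longrightarrow> s \<in> c0"
proof -
  assume h: "\<And>k. k \<ge> N \<Longrightarrow> s k = 0"
  have "eventually (\<lambda>k. s k = 0) sequentially" using h by (auto intro: eventually_sequentiallyI)
  then have "s \<longlonglongrightarrow> 0" by (rule tendsto_eventually)
  then show ?thesis by (simp add: c0_def)
qed

definition trunc :: "nat \<Rightarrow> (nat \<Rightarrow> real) \<Rightarrow> nat \<Rightarrow> real" where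
  "trunc N s = (\<lambda>k. if k < N then s k else 0)"

definition unitv :: "nat \<Rightarrow> nat \<Rightarrow> real" where
  "unitv n = (\<lambda>k. if k = n then 1 else 0)"

lemma trunc_c0: "trunc N s \<in> c0"
  by (rule c0_ev0[of N]) (auto simp: trunc_def)

lemma unitv_c0: "unitv n \<in> c0"
  by (rule c0_ev0[of "Suc n"]) (auto simp: unitv_def)

lemma c0_dual_lin:
  assumes "\<phi> \<in> c0_dual" "s \<in> c0" "t \<in> c0"
  shows "\<phi> (\<lambda>n. x * s n + y * t n) = x * \<phi> s + y * \<phi> t"
  using assms unfolding c0_dual_def by blast

lemma c0_dual_trunc:
  assumes "\<phi> \<in> c0_dual"
  shows "\<phi> (trunc N s) = (\<Sum>n<N. \<phi> (unitv n) * s n)"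
proof (induction N)
  case 0
  have "trunc 0 s = (\<lambda>n. 0 * trunc 0 s n + 0 * trunc 0 s n)" by (simp add: trunc_def)
  then have "\<phi> (trunc 0 s) = 0 * \<phi> (trunc 0 s) + 0 * \<phi> (trunc 0 s)"
    using c0_dual_lin[OF assms trunc_c0 trunc_c0] by metis
  then show ?case by simp
next
  case (Suc N)
  have "trunc (Suc N) s = (\<lambda>k. 1 * trunc N s k + s N * unitv N k)"
    by (rule ext) (auto simp: trunc_def unitv_def less_Suc_eq)
  then have "\<phi> (trunc (Suc N) s) = 1 * \<phi> (trunc N s) + s N * \<phi> (unitv N)"
    using c0_dual_lin[OF assms trunc_c0 unitv_c0] by metis
  then show ?case using Suc by simp
qed

lemma c0_dual_repr:
  assumes "\<phi> \<in> c0_dual"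
  shows "summable (\<lambda>n. \<bar>\<phi> (unitv n)\<bar>) \<and> (\<forall>s\<in>c0. \<phi> s = (\<Sum>n. \<phi> (unitv n) * s n))"
proof -
  define a where "a n = \<phi> (unitv n)" for n
  obtain K where K: "\<And>s. s \<in> c0 \<Longrightarrow> \<bar>\<phi> s\<bar> \<le> K * c0_norm s"
    using assms unfolding c0_dual_def by blast
  define K' where "K' = max K 0"
  have K': "\<And>s. s \<in> c0 \<Longrightarrow> \<bar>\<phi> s\<bar> \<le> K' * c0_norm s" "K' \<ge> 0"
  proof -
    fix s :: "nat \<Rightarrow> real" assume "s \<in> c0"
    then have "K * c0_norm s \<le> K' * c0_norm s"
      using c0_norm_nonneg by (auto simp: K'_def intro!: mult_right_mono)
    then show "\<bar>\<phi> s\<bar> \<le> K' * c0_norm s" using K[OF \<open>s \<in> c0\<close>] by linarith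
  qed (simp add: K'_def)
  have "summable (\<lambda>n. \<bar>a n\<bar>)"
  proof (rule summableI_nonneg_bounded)
    fix N
    have "(\<Sum>n<N. \<bar>a n\<bar>) = \<phi> (trunc N (\<lambda>n. sgn (a n)))"
      unfolding c0_dual_trunc[OF assms] a_def
      by (intro sum.cong refl) (simp add: sgn_if abs_if)
    also have "\<dots> \<le> K' * c0_norm (trunc N (\<lambda>n. sgn (a n)))" using K'(1)[OF trunc_c0, of N "\<lambda>n. sgn (a n)"] by linarith
    also have "\<dots> \<le> K' * 1"
      by (rule mult_left_mono[OF c0_norm_le K'(2)]) (auto simp: trunc_def abs_sgn_eq)
    finally show "(\<Sum>n<N. \<bar>a n\<bar>) \<le> K'" by simp
  qed simp
  moreover have "\<phi> s = (\<Sum>n. a n * s n)" if s: "s \<in> c0" for s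
  proof -
    have "(\<lambda>n. a n * s n) sums \<phi> s"
      unfolding sums_def LIMSEQ_iff
    proof (intro allI impI)
      fix r :: real assume r: "r > 0"
      define q where "q = r / (K' + 1)"
      have q: "q > 0" using r K'(2) by (simp add: q_def)
      obtain N0 where N0: "\<And>n. n \<ge> N0 \<Longrightarrow> \<bar>s n\<bar> < q"
        using s q unfolding c0_def LIMSEQ_iff by auto
      show "\<exists>no. \<forall>n\<ge>no. norm ((\<Sum>i<n. a i * s i) - \<phi> s) < r"
      proof (intro exI allI impI)
        fix N assume "N \<ge> N0"
        have eq: "(\<lambda>k. 1 * s k + (-1) * trunc N s k) \<in> c0" by (rule c0_lin[OF s trunc_c0])
        have "\<phi> (\<lambda>k. 1 * s k + (-1) * trunc N s k) = \<phi> s - \<phi> (trunc N s)"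
          using c0_dual_lin[OF assms s trunc_c0, of 1 "-1" N s] by simp
        moreover have "c0_norm (\<lambda>k. 1 * s k + (-1) * trunc N s k) \<le> q"
          using N0 \<open>N \<ge> N0\<close> q by (intro c0_norm_le) (auto simp: trunc_def less_imp_le)
        ultimately have "\<bar>\<phi> s - \<phi> (trunc N s)\<bar> \<le> K' * q"
        proof -
          assume h1: "\<phi> (\<lambda>k. 1 * s k + (-1) * trunc N s k) = \<phi> s - \<phi> (trunc N s)"
            and h2: "c0_norm (\<lambda>k. 1 * s k + (-1) * trunc N s k) \<le> q"
          have "K' * c0_norm (\<lambda>k. 1 * s k + (-1) * trunc N s k) \<le> K' * q"
            using h2 K'(2) by (rule mult_left_mono)
          then show ?thesis using K'(1)[OF eq] h1 by linarith
        qed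
        also have "K' * q < r" using r K'(2) by (simp add: q_def field_simps)
        finally show "norm ((\<Sum>i<N. a i * s i) - \<phi> s) < r"
          using c0_dual_trunc[OF assms, of N s] by (simp add: a_def abs_minus_commute)
      qed
    qed
    then show ?thesis by (simp add: sums_iff)
  qed
  ultimately show ?thesis by (simp add: a_def)
qed

definition gh_choose :: "(nat \<Rightarrow> real) set \<Rightarrow> nat \<Rightarrow> real \<Rightarrow> nat \<Rightarrow> nat \<times> (nat \<Rightarrow> real)" where
  "gh_choose K k A L = (SOME p. snd p \<in> K \<and> fst p \<ge> L \<and> \<bar>snd p (fst p)\<bar> > 2^k * (2^k * (real k + 3 + A)))"

definition tb :: "(nat \<Rightarrow> real) \<Rightarrow> nat" where
  "tb t = (SOME N. \<forall>n\<ge>N. \<bar>t n\<bar> \<le> 1)"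

definition gh_step :: "(nat \<Rightarrow> real) set \<Rightarrow> (nat \<Rightarrow> real) \<Rightarrow> nat \<Rightarrow> real \<Rightarrow> nat \<Rightarrow> nat \<times> (nat \<Rightarrow> real) \<times> real \<times> nat" where
  "gh_step K C k A L = (let p = gh_choose K k A L in
     (fst p, snd p, A + C (fst p) / 2^k, max (fst p + 1) (max L (tb (snd p)))))"

primrec gh_st :: "(nat \<Rightarrow> real) set \<Rightarrow> (nat \<Rightarrow> real) \<Rightarrow> nat \<Rightarrow> nat \<times> (nat \<Rightarrow> real) \<times> real \<times> nat" where
  "gh_st K C 0 = gh_step K C 0 0 0"
| "gh_st K C (Suc k) = gh_step K C (Suc k) (fst (snd (snd (gh_st K C k)))) (snd (snd (snd (gh_st K C k))))"

lemma tb_prop: "t \<in> c0 \<Longrightarrow> n \<ge> tb t \<Longrightarrow> \<bar>t n\<bar> \<le> 1"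
proof -
  assume t: "t \<in> c0" and n: "n \<ge> tb t"
  have "\<exists>N. \<forall>n\<ge>N. \<bar>t n\<bar> \<le> 1"
  proof -
    obtain N where "\<forall>n\<ge>N. norm (t n - 0) < 1" using t unfolding c0_def LIMSEQ_iff by fastforce
    then show ?thesis by (auto intro!: exI[of _ N] less_imp_le)
  qed
  from someI_ex[OF this] n show ?thesis unfolding tb_def by blast
qed

lemma ubp_c0:
  assumes K: "K \<subseteq> c0"
    and H: "\<And>a. summable (\<lambda>n. \<bar>a n\<bar>) \<Longrightarrow> \<exists>B. \<forall>t\<in>K. \<bar>\<Sum>n. a n * t n\<bar> \<le> B"
  shows "\<exists>M. \<forall>t\<in>K. \<forall>n. \<bar>t n\<bar> \<le> M"
proof (rule ccontr)
  assume nb: "\<not> (\<exists>M. \<forall>t\<in>K. \<forall>n. \<bar>t n\<bar> \<le> M)"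
  have "\<exists>B. \<forall>t\<in>K. \<bar>t n\<bar> \<le> B" for n
  proof -
    have su: "summable (\<lambda>k. \<bar>unitv n k\<bar>)"
      by (rule summable_finite[of "{n}"]) (auto simp: unitv_def)
    have "(\<Sum>k. unitv n k * t k) = t n" for t
    proof -
      have "(\<lambda>k. if k = n then t k else 0) sums t n" by (rule sums_single)
      moreover have "(\<lambda>k. unitv n k * t k) = (\<lambda>k. if k = n then t k else 0)" by (auto simp: unitv_def)
      ultimately show ?thesis by (simp add: sums_iff)
    qed
    then show ?thesis using H[OF su] by simp
  qed
  then obtain C0 where "\<And>n t. t \<in> K \<Longrightarrow> \<bar>t n\<bar> \<le> C0 n" by metis
  define C where "C n = max (C0 n) 0" for n
  have C: "\<And>n t. t \<in> K \<Longrightarrow> \<bar>t n\<bar> \<le> C n" "\<And>n. C n \<ge> 0"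
    using \<open>\<And>n t. t \<in> K \<Longrightarrow> \<bar>t n\<bar> \<le> C0 n\<close> unfolding C_def by (meson max.coboundedI1, simp)
  have big: "\<exists>t\<in>K. \<exists>n\<ge>N. \<bar>t n\<bar> > M" for N M
  proof (rule ccontr)
    assume "\<not> (\<exists>t\<in>K. \<exists>n\<ge>N. \<bar>t n\<bar> > M)"
    then have h: "\<And>t n. t \<in> K \<Longrightarrow> n \<ge> N \<Longrightarrow> \<bar>t n\<bar> \<le> M" by force
    have "\<forall>t\<in>K. \<forall>n. \<bar>t n\<bar> \<le> max M 0 + (\<Sum>k<N. C k)"
    proof (intro ballI allI)
      fix t n assume t: "t \<in> K"
      show "\<bar>t n\<bar> \<le> max M 0 + (\<Sum>k<N. C k)"
      proof (cases "n < N")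
        case True
        have "C n \<le> (\<Sum>k<N. C k)" by (rule member_le_sum) (use True C(2) in auto)
        then show ?thesis using C(1)[OF t, of n] by linarith
      next
        case False
        have "0 \<le> (\<Sum>k<N. C k)" by (rule sum_nonneg) (use C(2) in auto)
        then show ?thesis using h[OF t, of n] False by linarith
      qed
    qed
    then show False using nb by blast
  qed
  define st where "st = gh_st K C"
  define nn where "nn k = fst (st k)" for k
  define tt where "tt k = fst (snd (st k))" for k
  define AA where "AA k = (case k of 0 \<Rightarrow> 0 | Suc j \<Rightarrow> fst (snd (snd (st j))))" for k
  define LL where "LL k = (case k of 0 \<Rightarrow> 0 | Suc j \<Rightarrow> snd (snd (snd (st j))))" for k
  have st_eq: "st k = gh_step K C k (AA k) (LL k)" for k
    by (cases k) (simp_all add: st_def AA_def LL_def)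
  have choose: "snd (gh_choose K k A L) \<in> K \<and> fst (gh_choose K k A L) \<ge> L \<and>
      \<bar>snd (gh_choose K k A L) (fst (gh_choose K k A L))\<bar> > 2^k * (2^k * (real k + 3 + A))" for k A L
  proof -
    obtain t n where "t \<in> K" "n \<ge> L" "\<bar>t n\<bar> > 2^k * (2^k * (real k + 3 + A))" using big by blast
    then have "\<exists>p. snd p \<in> K \<and> fst p \<ge> L \<and> \<bar>snd p (fst p)\<bar> > 2^k * (2^k * (real k + 3 + A))"
      by (intro exI[of _ "(n, t)"]) auto
    from someI_ex[OF this] show ?thesis unfolding gh_choose_def .
  qed
  have F1: "tt k \<in> K" "nn k \<ge> LL k" "\<bar>tt k (nn k)\<bar> > 2^k * (2^k * (real k + 3 + AA k))" for k
    using choose[of k "AA k" "LL k"] by (simp_all add: tt_def nn_def st_eq gh_step_def Let_def)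
  have F2: "AA (Suc k) = AA k + C (nn k) / 2^k" "LL (Suc k) = max (nn k + 1) (max (LL k) (tb (tt k)))" for k
    by (simp_all add: AA_def LL_def st_eq[of k] gh_step_def Let_def nn_def tt_def st_eq)
  have AA_sum: "AA k = (\<Sum>j<k. C (nn j) / 2^j)" for k
  proof (induction k)
    case 0 then show ?case by (simp add: AA_def)
  next
    case (Suc k) then show ?case by (simp add: F2(1))
  qed
  have AA0: "AA k \<ge> 0" for k unfolding AA_sum by (rule sum_nonneg) (use C(2) in auto)
  have smono: "strict_mono nn"
  proof (rule strict_monoI_Suc)
    fix k show "nn k < nn (Suc k)" using F1(2)[of "Suc k"] F2(2)[of k] by linarith
  qed
  have LLmono: "LL j \<le> LL k" if "j \<le> k" for j k
    using that
  proof (induction k)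
    case (Suc k) then show ?case using F2(2)[of k] by (cases "j = Suc k") auto
  qed simp
  have tail: "\<bar>tt j (nn i)\<bar> \<le> 1" if "j < i" for i j
  proof -
    have "tb (tt j) \<le> LL (Suc j)" using F2(2)[of j] by simp
    also have "\<dots> \<le> LL i" using LLmono that by simp
    also have "\<dots> \<le> nn i" by (rule F1(2))
    finally show ?thesis using tb_prop[of "tt j" "nn i"] F1(1)[of j] K by auto
  qed
  define a :: "nat \<Rightarrow> real" where "a n = (if n \<in> range nn then 1 / 2 ^ (inv nn n) else 0)" for n
  have inj: "inj nn" using smono strict_mono_imp_inj_on by blast
  have a_nn: "a (nn k) = 1 / 2^k" for k using inj by (simp add: a_def)
  have a_zero: "n \<notin> range nn \<Longrightarrow> a n = 0" for n by (simp add: a_def)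
  have sa: "summable (\<lambda>n. \<bar>a n\<bar>)"
  proof -
    have "(\<lambda>k. \<bar>a (nn k)\<bar>) sums 2"
      using geometric_sums[of "1/2::real"] by (simp add: a_nn power_divide)
    then have "(\<lambda>n. \<bar>a n\<bar>) sums 2" using sums_mono_reindex[OF smono, of "\<lambda>n. \<bar>a n\<bar>"] a_zero by simp
    then show ?thesis by (rule sums_summable)
  qed
  obtain B where B: "\<And>t. t \<in> K \<Longrightarrow> \<bar>\<Sum>n. a n * t n\<bar> \<le> B" using H[OF sa] by blast
  have lower: "\<bar>\<Sum>n. a n * tt m n\<bar> \<ge> real m + 1" for m
  proof -
    have tm: "tt m \<in> c0" using F1(1) K by auto
    define w where "w k = tt m (nn k) / 2^k" for k
    have "(\<lambda>n. a n * tt m n) sums (\<Sum>n. a n * tt m n)"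
      using l1_summable(1)[OF sa tm] by (rule summable_sums)
    then have ws: "w sums (\<Sum>n. a n * tt m n)"
    proof -
      have "w = (\<lambda>k. tt m (nn k) / 2^k)" by (rule ext) (simp add: w_def)
      then show ?thesis using \<open>(\<lambda>n. a n * tt m n) sums (\<Sum>n. a n * tt m n)\<close>
        sums_mono_reindex[OF smono, of "\<lambda>n. a n * tt m n"] a_zero by (simp add: a_nn)
    qed
    define z where "z k = (if k = m then 0 else w k)" for k
    have "(\<lambda>k. if k = m then w k else 0) sums w m" by (rule sums_single)
    then have zs: "z sums ((\<Sum>n. a n * tt m n) - w m)"
    proof -
      have "z = (\<lambda>k. w k - (if k = m then w k else 0))" by (rule ext) (simp add: z_def)
      then show ?thesis using sums_diff[OF ws \<open>(\<lambda>k. if k = m then w k else 0) sums w m\<close>] by simp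
    qed
    define e where "e k = (if k < m then C (nn k) / 2^k else 0) + (1/2)^k" for k
    have es1: "(\<lambda>k. if k < m then C (nn k) / 2^k else 0) sums AA m"
    proof -
      have "(\<lambda>k. if k < m then C (nn k) / 2^k else 0) sums (\<Sum>k\<in>{..<m}. (if k < m then C (nn k) / 2^k else 0))"
        by (rule sums_finite) auto
      then show ?thesis by (simp add: AA_sum)
    qed
    have g2: "(\<lambda>k. (1/2::real)^k) sums 2" using geometric_sums[of "1/2::real"] by simp
    have "e = (\<lambda>k. (if k < m then C (nn k) / 2^k else 0) + (1/2)^k)" by (rule ext) (simp add: e_def)
    then have es: "e sums (AA m + 2)" using sums_add[OF es1 g2] by simp
    have ze: "\<bar>z k\<bar> \<le> e k" for k
    proof (cases "k < m")
      case True
      have "\<bar>z k\<bar> = \<bar>tt m (nn k)\<bar> / 2^k" using True by (simp add: z_def w_def abs_divide)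
      also have "\<dots> \<le> C (nn k) / 2^k" by (rule divide_right_mono[OF C(1)[OF F1(1)]]) simp
      also have "\<dots> \<le> e k" using True by (simp add: e_def)
      finally show ?thesis .
    next
      case False
      show ?thesis
      proof (cases "k = m")
        case True then show ?thesis using C(2) by (simp add: z_def e_def)
      next
        case False
        then have "m < k" using \<open>\<not> k < m\<close> by simp
        have "\<bar>z k\<bar> = \<bar>tt m (nn k)\<bar> / 2^k" using False by (simp add: z_def w_def abs_divide)
        also have "\<dots> \<le> 1 / 2^k" by (rule divide_right_mono[OF tail[OF \<open>m < k\<close>]]) simp
        also have "\<dots> = e k" using \<open>\<not> k < m\<close> by (simp add: e_def power_divide)
        finally show ?thesis .
      qed
    qed
    have "\<bar>(\<Sum>n. a n * tt m n) - w m\<bar> \<le> AA m + 2"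
    proof -
      have sz: "summable (\<lambda>k. \<bar>z k\<bar>)"
        by (rule summable_comparison_test[OF _ sums_summable[OF es]]) (use ze in auto)
      have "\<bar>(\<Sum>n. a n * tt m n) - w m\<bar> = \<bar>suminf z\<bar>" using zs by (simp add: sums_iff)
      also have "\<dots> \<le> (\<Sum>k. \<bar>z k\<bar>)" by (rule summable_rabs[OF sz])
      also have "\<dots> \<le> suminf e" by (rule suminf_le[OF ze sz sums_summable[OF es]])
      also have "\<dots> = AA m + 2" using es by (simp add: sums_iff)
      finally show ?thesis .
    qed
    moreover have "\<bar>w m\<bar> \<ge> 2^m * (real m + 3 + AA m)"
    proof -
      have "\<bar>w m\<bar> = \<bar>tt m (nn m)\<bar> / 2^m" by (simp add: w_def abs_divide)
      moreover have "\<bar>tt m (nn m)\<bar> / 2^m > 2^m * (real m + 3 + AA m)"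
        using F1(3)[of m] by (simp add: field_simps)
      ultimately show ?thesis by simp
    qed
    moreover have "(2::real)^m * (real m + 3 + AA m) \<ge> real m + 3 + AA m"
      using mult_right_mono[of 1 "(2::real)^m" "real m + 3 + AA m"] AA0[of m] by simp
    moreover have "\<bar>w m\<bar> \<le> \<bar>\<Sum>n. a n * tt m n\<bar> + \<bar>(\<Sum>n. a n * tt m n) - w m\<bar>" by arith
    ultimately show ?thesis by (smt (verit))
  qed
  define m where "m = nat \<lceil>B\<rceil>"
  have "real m + 1 > B" unfolding m_def by linarith
  then show False using lower[of m] B[OF F1(1)[of m]] by linarith
qed

lemma c0_Hausdorff: "Hausdorff_space c0_weak"
  unfolding Hausdorff_space_def c0_topspace
proof (intro allI impI)
  fix x y assume xy: "x \<in> c0 \<and> y \<in> c0 \<and> x \<noteq> y"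
  then obtain n where n: "x n \<noteq> y n" by blast
  define r where "r = \<bar>x n - y n\<bar> / 2"
  have r: "r > 0" using n by (simp add: r_def)
  define U where "U = {s \<in> topspace c0_weak. s n \<in> ball (x n) r}"
  define V where "V = {s \<in> topspace c0_weak. s n \<in> ball (y n) r}"
  have "openin c0_weak U" unfolding U_def by (rule openin_continuous_map_preimage[OF coord_cont]) simp
  moreover have "openin c0_weak V" unfolding V_def by (rule openin_continuous_map_preimage[OF coord_cont]) simp
  moreover have "x \<in> U" "y \<in> V" using xy r by (auto simp: U_def V_def c0_topspace)
  moreover have "disjnt U V"
    unfolding disjnt_def U_def V_def
    using abs_triangle_ineq[of "x n - s n" "s n - y n" for s]
    by (auto simp: r_def dist_real_def) (smt (verit) abs_minus_commute abs_triangle_ineq4)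
  ultimately show "\<exists>U V. openin c0_weak U \<and> openin c0_weak V \<and> x \<in> U \<and> y \<in> V \<and> disjnt U V"
    by blast
qed

lemma c0_weak_cont_into:
  assumes "\<And>p. p \<in> topspace X \<Longrightarrow> f p \<in> c0"
    and "\<And>\<phi>. \<phi> \<in> c0_dual \<Longrightarrow> continuous_map X euclidean (\<lambda>p. \<phi> (f p))"
  shows "continuous_map X c0_weak f"
proof -
  have tc: "\<Union>{{s \<in> c0. \<phi> s \<in> U} | \<phi> U. \<phi> \<in> c0_dual \<and> open U} = c0"
    using c0_topspace unfolding c0_weak_def by simp
  show ?thesis unfolding c0_weak_def continuous_on_generated_topo_iff tc
  proof (intro conjI allI impI)
    fix W assume "W \<in> {{s \<in> c0. \<phi> s \<in> U} | \<phi> U. \<phi> \<in> c0_dual \<and> open U}"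
    then obtain \<phi> U where W: "W = {s \<in> c0. \<phi> s \<in> U}" and \<phi>: "\<phi> \<in> c0_dual" and U: "open U" by blast
    have "openin X {p \<in> topspace X. \<phi> (f p) \<in> U}"
      by (rule openin_continuous_map_preimage[OF assms(2)[OF \<phi>]]) (use U in simp)
    moreover have "f -` W \<inter> topspace X = {p \<in> topspace X. \<phi> (f p) \<in> U}"
      using assms(1) W by auto
    ultimately show "openin X (f -` W \<inter> topspace X)" by simp
  qed (use assms(1) in auto)
qed

definition Lam :: "(nat \<Rightarrow> real) topology" where
  "Lam = product_topology (\<lambda>_. top_of_set {-1..1}) UNIV"

definition Phi :: "(nat \<Rightarrow> real) \<times> (nat \<Rightarrow> real) \<Rightarrow> nat \<Rightarrow> real" where
  "Phi p = (\<lambda>n. snd p n * fst p n)"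

lemma topspace_Lam: "topspace Lam = PiE UNIV (\<lambda>_. {-1..1})"
  by (simp add: Lam_def)

lemma Phi_c0:
  assumes "fst p \<in> c0" "\<And>n. \<bar>snd p n\<bar> \<le> 1"
  shows "Phi p \<in> c0"
proof -
  have t0: "(\<lambda>n. \<bar>fst p n\<bar>) \<longlonglongrightarrow> 0" using assms(1) unfolding c0_def by (simp add: tendsto_rabs_zero)
  have "(\<lambda>n. snd p n * fst p n) \<longlonglongrightarrow> 0"
  proof (rule Lim_null_comparison[OF _ t0])
    show "\<forall>\<^sub>F n in sequentially. norm (snd p n * fst p n) \<le> \<bar>fst p n\<bar>"
      using assms(2) by (auto simp: abs_mult intro!: always_eventually mult_left_le_one_le)
  qed
  then show "Phi p \<in> c0" by (simp add: Phi_def c0_def)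
qed

lemma Phi_cont:
  assumes K: "K \<subseteq> c0" and M: "\<And>t n. t \<in> K \<Longrightarrow> \<bar>t n\<bar> \<le> M" and M0: "M \<ge> 0"
  shows "continuous_map (prod_topology (subtopology c0_weak K) Lam) c0_weak Phi"
proof (rule c0_weak_cont_into)
  define X where "X = prod_topology (subtopology c0_weak K) Lam"
  have tX: "topspace X = K \<times> PiE UNIV (\<lambda>_. {-1..1})"
    using K by (auto simp: X_def topspace_Lam c0_topspace)
  have lam_bd: "\<bar>snd p n\<bar> \<le> 1" if "p \<in> topspace X" for p n
    using that tX by (auto simp: PiE_def Pi_def abs_le_iff)
  have bd: "\<bar>snd p n * fst p n\<bar> \<le> M" if "p \<in> topspace X" for p n
  proof -
    have "\<bar>snd p n * fst p n\<bar> \<le> 1 * \<bar>fst p n\<bar>"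
      unfolding abs_mult by (rule mult_right_mono[OF lam_bd[OF that]]) simp
    also have "\<dots> \<le> M" using M that tX by auto
    finally show ?thesis .
  qed
  fix p assume p: "p \<in> topspace (prod_topology (subtopology c0_weak K) Lam)"
  then have p': "p \<in> topspace X" by (simp add: X_def)
  have "fst p \<in> c0" using p' tX K by auto
  then show "Phi p \<in> c0" using Phi_c0 lam_bd[OF p'] by blast
next
  define X where "X = prod_topology (subtopology c0_weak K) Lam"
  have tX: "topspace X = K \<times> PiE UNIV (\<lambda>_. {-1..1})"
    using K by (auto simp: X_def topspace_Lam c0_topspace)
  have lam_bd: "\<bar>snd p n\<bar> \<le> 1" if "p \<in> topspace X" for p n
    using that tX by (auto simp: PiE_def Pi_def abs_le_iff)
  have bd: "\<bar>snd p n * fst p n\<bar> \<le> M" if "p \<in> topspace X" for p n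
  proof -
    have "\<bar>snd p n * fst p n\<bar> \<le> 1 * \<bar>fst p n\<bar>"
      unfolding abs_mult by (rule mult_right_mono[OF lam_bd[OF that]]) simp
    also have "\<dots> \<le> M" using M that tX by auto
    finally show ?thesis .
  qed
  fix \<phi> assume \<phi>: "\<phi> \<in> c0_dual"
  define a where "a n = \<phi> (unitv n)" for n
  have sa: "summable (\<lambda>n. \<bar>a n\<bar>)" and rep: "\<And>s. s \<in> c0 \<Longrightarrow> \<phi> s = (\<Sum>n. a n * s n)"
    using c0_dual_repr[OF \<phi>] by (auto simp: a_def)
  define b where "b p n = a n * (snd p n * fst p n)" for p n
  have bb: "\<bar>b p n\<bar> \<le> \<bar>a n\<bar> * M" if "p \<in> topspace X" for p n
    unfolding b_def abs_mult[of "a n"] by (rule mult_left_mono[OF bd[OF that]]) simp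
  have sM: "summable (\<lambda>n. \<bar>a n\<bar> * M)" by (rule summable_mult2[OF sa])
  have sb: "summable (\<lambda>n. \<bar>b p n\<bar>)" if "p \<in> topspace X" for p
    by (rule summable_comparison_test[OF _ sM]) (use bb[OF that] in auto)
  have cont_g: "continuous_map X euclidean (\<lambda>p. \<Sum>n. b p n)"
  proof -
    have "continuous_map X Met_TC.mtopology (\<lambda>p. \<Sum>n. b p n)"
    proof (rule Met_TC.continuous_map_uniform_limit[where F=sequentially and f="\<lambda>N p. \<Sum>n<N. b p n"])
      show "\<forall>\<^sub>F N in sequentially. continuous_map X Met_TC.mtopology (\<lambda>p. \<Sum>n<N. b p n)"
      proof (rule always_eventually, intro allI)
        fix N
        have c1: "continuous_map X euclidean (\<lambda>p. fst p n)" for n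
        proof -
          have "continuous_map X (subtopology c0_weak K) fst" unfolding X_def by (rule continuous_map_fst)
          moreover have "continuous_map (subtopology c0_weak K) euclidean (\<lambda>s. s n)"
            by (rule continuous_map_from_subtopology[OF coord_cont])
          ultimately show ?thesis using continuous_map_compose by (fastforce simp: o_def)
        qed
        have c2: "continuous_map X euclidean (\<lambda>p. snd p n)" for n
        proof -
          have "continuous_map X Lam snd" unfolding X_def by (rule continuous_map_snd)
          moreover have "continuous_map Lam (top_of_set {-1..1}) (\<lambda>x. x n)"
            unfolding Lam_def by (rule continuous_map_product_projection) simp
          ultimately have "continuous_map X (top_of_set {-1..1}) (\<lambda>p. snd p n)"
            using continuous_map_compose by (fastforce simp: o_def)
          then show ?thesis by (rule continuous_map_into_fulltopology)
        qed
        have "continuous_map X euclidean (\<lambda>p. \<Sum>n<N. b p n)"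
          unfolding b_def
          by (intro continuous_map_sum continuous_map_real_mult_left continuous_map_real_mult c1 c2) auto
        then show "continuous_map X Met_TC.mtopology (\<lambda>p. \<Sum>n<N. b p n)" by simp
      qed
    next
      fix e :: real assume e: "e > 0"
      obtain N0 where N0: "\<And>N. N \<ge> N0 \<Longrightarrow> norm (\<Sum>i. \<bar>a (i + N)\<bar>) < e / (M + 1)"
        using suminf_exist_split[of "e / (M + 1)" "\<lambda>n. \<bar>a n\<bar>"] e M0 sa by auto
      show "\<forall>\<^sub>F N in sequentially. \<forall>p\<in>topspace X. (\<Sum>n. b p n) \<in> UNIV \<and> dist (\<Sum>n<N. b p n) (\<Sum>n. b p n) < e"
      proof (rule eventually_sequentiallyI[of N0], intro ballI conjI)
        fix N p assume N: "N \<ge> N0" and p: "p \<in> topspace X"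
        have sbp: "summable (b p)" using sb[OF p] by (rule summable_rabs_cancel)
        have "(\<Sum>n. b p n) = (\<Sum>n. b p (n + N)) + (\<Sum>n<N. b p n)"
          by (rule suminf_split_initial_segment[OF sbp])
        then have "dist (\<Sum>n<N. b p n) (\<Sum>n. b p n) = \<bar>\<Sum>n. b p (n + N)\<bar>"
          by (simp add: dist_real_def)
        also have "\<dots> \<le> (\<Sum>n. \<bar>b p (n + N)\<bar>)"
          by (rule summable_rabs) (use sb[OF p] summable_iff_shift[of "\<lambda>n. \<bar>b p n\<bar>" N] in simp)
        also have "\<dots> \<le> (\<Sum>n. \<bar>a (n + N)\<bar> * M)"
          by (rule suminf_le) (use bb[OF p] sb[OF p] sM summable_iff_shift[of "\<lambda>n. \<bar>b p n\<bar>" N] summable_iff_shift[of "\<lambda>n. \<bar>a n\<bar> * M" N] in auto)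
        also have "\<dots> = (\<Sum>n. \<bar>a (n + N)\<bar>) * M"
          by (rule suminf_mult2[symmetric]) (use sa summable_iff_shift[of "\<lambda>n. \<bar>a n\<bar>" N] in simp)
        also have "\<dots> \<le> e / (M + 1) * M"
          using N0[OF N] M0 by (intro mult_right_mono) auto
        also have "\<dots> < e" using e M0 by (simp add: field_simps)
        finally show "dist (\<Sum>n<N. b p n) (\<Sum>n. b p n) < e" .
      qed simp
    qed simp
    then show ?thesis by simp
  qed
  show "continuous_map (prod_topology (subtopology c0_weak K) Lam) euclidean (\<lambda>p. \<phi> (Phi p))"
    unfolding X_def[symmetric]
  proof (rule continuous_map_eq[OF cont_g])
    fix p assume p: "p \<in> topspace X"
    have "Phi p \<in> c0" using Phi_c0 lam_bd[OF p] p tX K by auto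
    then show "(\<Sum>n. b p n) = \<phi> (Phi p)" using rep by (simp add: Phi_def b_def)
  qed
qed

lemma solid_c0:
  assumes S: "rel_weakly_compact_c0 S" and T: "T \<subseteq> c0"
    and dom: "\<And>s. s \<in> T \<Longrightarrow> \<exists>t\<in>S. \<forall>n. \<bar>s n\<bar> \<le> \<bar>t n\<bar>"
  shows "rel_weakly_compact_c0 T"
proof -
  define K where "K = c0_weak closure_of S"
  have Sc0: "S \<subseteq> c0" and Kc: "compactin c0_weak K"
    using S by (auto simp: rel_weakly_compact_c0_def K_def)
  have Kc0: "K \<subseteq> c0" using compactin_subset_topspace[OF Kc] by (simp add: c0_topspace)
  have SK: "S \<subseteq> K" unfolding K_def by (rule closure_of_subset) (use Sc0 in \<open>simp add: c0_topspace\<close>)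
  have "\<exists>B. \<forall>t\<in>K. \<bar>\<Sum>n. a n * t n\<bar> \<le> B" if a: "summable (\<lambda>n. \<bar>a n\<bar>)" for a
  proof -
    have "compactin euclidean ((\<lambda>s. \<Sum>n. a n * s n) ` K)"
      by (rule image_compactin[OF Kc c0_dual_cont[OF l1_c0_dual[OF a]]])
    then have "bounded ((\<lambda>s. \<Sum>n. a n * s n) ` K)" by (simp add: compact_imp_bounded)
    then show ?thesis by (auto simp: bounded_iff)
  qed
  then have "\<exists>M. \<forall>t\<in>K. \<forall>n. \<bar>t n\<bar> \<le> M" by (rule ubp_c0[OF Kc0])
  then obtain M where M: "\<And>t n. t \<in> K \<Longrightarrow> \<bar>t n\<bar> \<le> M" by blast
  define M' where "M' = max M 0"
  have M': "\<And>t n. t \<in> K \<Longrightarrow> \<bar>t n\<bar> \<le> M'" "M' \<ge> 0"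
    using M unfolding M'_def by (meson max.coboundedI1, simp)
  define X where "X = prod_topology (subtopology c0_weak K) Lam"
  have contP: "continuous_map X c0_weak Phi" unfolding X_def using Phi_cont[of K M'] Kc0 M' by blast
  have cLam: "compact_space Lam"
    unfolding Lam_def compact_space_product_topology
    by (auto intro!: compact_space_subtopology)
  have cX: "compactin X (K \<times> topspace Lam)"
    unfolding X_def compactin_Times
    using Kc cLam by (auto simp: compactin_subtopology compact_space_def)
  define Q where "Q = Phi ` (K \<times> topspace Lam)"
  have Qc: "compactin c0_weak Q" unfolding Q_def by (rule image_compactin[OF cX contP])
  have Qcl: "closedin c0_weak Q" by (rule compactin_imp_closedin[OF c0_Hausdorff Qc])
  have TQ: "T \<subseteq> Q"
  proof
    fix s assume s: "s \<in> T"
    then obtain t where t: "t \<in> S" "\<And>n. \<bar>s n\<bar> \<le> \<bar>t n\<bar>" using dom by blast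
    define l where "l n = (if t n = 0 then 0 else s n / t n)" for n
    have "\<bar>l n\<bar> \<le> 1" for n
      using t(2)[of n] by (auto simp: l_def abs_divide divide_le_eq_1)
    then have "l \<in> topspace Lam" by (auto simp: topspace_Lam abs_le_iff)
    moreover have "Phi (t, l) = s"
    proof -
      have "s n = 0" if "t n = 0" for n using t(2)[of n] that by simp
      then show ?thesis by (auto simp: Phi_def l_def fun_eq_iff)
    qed
    ultimately show "s \<in> Q" using t(1) SK unfolding Q_def by (metis SigmaI image_eqI subsetD)
  qed
  have "c0_weak closure_of T \<subseteq> Q" by (rule closure_of_minimal[OF TQ Qcl])
  then have "compactin c0_weak (c0_weak closure_of T)"
    by (rule closed_compactin[OF Qc]) simp
  then show ?thesis using T by (simp add: rel_weakly_compact_c0_def)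
qed

lemma rwc_mono: "rel_weakly_compact_c0 T \<Longrightarrow> S \<subseteq> T \<Longrightarrow> rel_weakly_compact_c0 S"
  unfolding rel_weakly_compact_c0_def
  by (meson closed_compactin closedin_closure_of closure_of_mono order_trans)

theorem mainTheorem2:
  fixes A :: "'a::banach_lattice set"
  assumes "property_d TYPE('a)"
  shows "almost_grothendieck (labs ` A) \<longleftrightarrow> almost_grothendieck (sol A)"
proof
  assume ag: "almost_grothendieck (labs ` A)"
  show "almost_grothendieck (sol A)" unfolding almost_grothendieck_def
  proof (intro allI impI)
    fix f :: "nat \<Rightarrow> 'a \<Rightarrow> real" assume fw: "weak_star_null f \<and> disjoint_dual_seq f"
    define g where "g n = dual_abs (f n)" for n
    have blf: "bounded_linear (f n)" for n using fw by (simp add: weak_star_null_def)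
    have idem: "dual_abs (g n) = dual_abs (f n)" for n unfolding g_def by (rule da_idem[OF blf])
    have gw: "weak_star_null g"
      unfolding weak_star_null_def
    proof (intro conjI allI)
      fix n show "bounded_linear (g n)" unfolding g_def by (rule da_linear[OF blf])
    next
      fix x show "(\<lambda>n. g n x) \<longlonglongrightarrow> 0"
        using assms fw unfolding property_d_def g_def by blast
    qed
    have gd: "disjoint_dual_seq g"
      using fw unfolding disjoint_dual_seq_def dual_disjoint_def idem by blast
    have S: "rel_weakly_compact_c0 ((\<lambda>x n. g n x) ` labs ` A)"
      using ag gw gd unfolding almost_grothendieck_def by blast
    show "rel_weakly_compact_c0 ((\<lambda>x n. f n x) ` sol A)"
    proof (rule solid_c0[OF S])
      show "(\<lambda>x n. f n x) ` sol A \<subseteq> c0"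
        using fw by (auto simp: weak_star_null_def c0_def)
    next
      fix s assume "s \<in> (\<lambda>x n. f n x) ` sol A"
      then obtain x y where s: "s = (\<lambda>n. f n x)" and y: "y \<in> A" "labs x \<le> labs y"
        unfolding sol_def by blast
      have "\<bar>s n\<bar> \<le> \<bar>g n (labs y)\<bar>" for n
      proof -
        have "\<bar>f n x\<bar> \<le> g n (labs y)" unfolding g_def by (rule da_dom[OF blf y(2)])
        moreover have "0 \<le> g n (labs y)" unfolding g_def by (rule da_pos_nonneg[OF blf labs_nonneg])
        ultimately show ?thesis by (simp add: s)
      qed
      moreover have "(\<lambda>n. g n (labs y)) \<in> (\<lambda>x n. g n x) ` labs ` A" using y(1) by blast
      ultimately show "\<exists>t\<in>(\<lambda>x n. g n x) ` labs ` A. \<forall>n. \<bar>s n\<bar> \<le> \<bar>t n\<bar>"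
        by (intro bexI[of _ "\<lambda>n. g n (labs y)"]) auto
    qed
  qed
next
  assume ag: "almost_grothendieck (sol A)"
  have sub: "labs ` A \<subseteq> sol A"
  proof
    fix z assume "z \<in> labs ` A"
    then obtain x where x: "x \<in> A" "z = labs x" by blast
    have "labs z \<le> labs x" using labs_pos[OF labs_nonneg, of x] x(2) by simp
    then show "z \<in> sol A" unfolding sol_def using x(1) by blast
  qed
  show "almost_grothendieck (labs ` A)" unfolding almost_grothendieck_def
  proof (intro allI impI)
    fix f :: "nat \<Rightarrow> 'a \<Rightarrow> real" assume "weak_star_null f \<and> disjoint_dual_seq f"
    then have "rel_weakly_compact_c0 ((\<lambda>x n. f n x) ` sol A)" using ag unfolding almost_grothendieck_def by blast
    then show "rel_weakly_compact_c0 ((\<lambda>x n. f n x) ` labs ` A)" by (rule rwc_mono) (use sub in blast)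
  qed
qed

end
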